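(* Let $n\ge 3$. The Hosoya polynomial of the power graph $P(G(n))$ of the gyrogroup $G(n)$ (defined in the context) is $$H(P(G(n)),x)=2^n x^0+\frac{2^{n-1}(2^{n-1}+1)}{2}x^1+\frac{3\cdot 2^{n-1}(2^{n-1}-1)}{2}x^2.$$
   Context: Let $n\ge 3$ be an integer and $m=2^{n-1}$. Let $P(n)=\{0,1,\dots,m-1\}$, $H(n)=\{m,m+1,\dots,2^n-1\}$ and $G(n)=P(n)\cup H(n)$. For $i,j\in G(n)$ let $t,s,k\in P(n)$ be the residues modulo $m$ (taken in $\{0,\dots,m-1\}$) of $i+j$, $i+(\frac m2-1)j$ and $(\frac m2+1)i+(\frac m2-1)j$, respectively, and define $i\oplus j=t$ if $i,j\in P(n)$; $i\oplus j=t+m$ if $i\in P(n),j\in H(n)$; $i\oplus j=s+m$ if $i\in H(n),j\in P(n)$; $i\oplus j=k$ if $i,j\in H(n)$. Then $(G(n),\oplus)$ is a gyrogroup with identity $e=0$. Powers are defined by $a^1=a$, $a^{k+1}=a^k\oplus a$. The power graph $P(G(n))$ is the simple undirected graph with vertex set $G(n)$ in which distinct vertices $u,v$ are adjacent if and only if $u^k=v$ or $v^k=u$ for some positive integer $k$. For a connected graph $G$, $dis(G,i)$ denotes the number of unordered pairs $\{u,v\}$ of vertices (with $u=v$ allowed) at distance $i$, and the Hosoya polynomial is $H(G,x)=\sum_{i\ge 0} dis(G,i)x^i$. *)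

theory Defs
  imports "HOL-Computational_Algebra.Polynomial"
begin

text \<open>The gyrogroup G(n) on the carrier {0..<2^n}; m = 2^(n-1);
  P(n) = {0..<m}, H(n) = {m..<2^n}.\<close>

definition gcarrier :: "nat \<Rightarrow> nat set" where
  "gcarrier n = {0..<2^n}"

definition gop :: "nat \<Rightarrow> nat \<Rightarrow> nat \<Rightarrow> nat" where
  "gop n i j =
    (let m = 2^(n-1);
         t = (i + j) mod m;
         s = (i + (m div 2 - 1) * j) mod m;
         k = ((m div 2 + 1) * i + (m div 2 - 1) * j) mod m
     in if i < m \<and> j < m then t
        else if i < m \<and> m \<le> j then t + m
        else if m \<le> i \<and> j < m then s + m
        else k)"

text \<open>Powers: a^1 = a, a^(k+1) = a^k \<oplus> a (meaningful for k \<ge> 1).\<close>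
definition gpow :: "nat \<Rightarrow> nat \<Rightarrow> nat \<Rightarrow> nat" where
  "gpow n a k = ((\<lambda>x. gop n x a) ^^ (k - 1)) a"

definition padj :: "nat \<Rightarrow> nat \<Rightarrow> nat \<Rightarrow> bool" where
  "padj n u v \<longleftrightarrow> u \<in> gcarrier n \<and> v \<in> gcarrier n \<and> u \<noteq> v \<and>
     (\<exists>k\<ge>1. gpow n u k = v \<or> gpow n v k = u)"

definition is_walk :: "'a set \<Rightarrow> ('a \<Rightarrow> 'a \<Rightarrow> bool) \<Rightarrow> 'a list \<Rightarrow> bool" where
  "is_walk V E xs \<longleftrightarrow> xs \<noteq> [] \<and> set xs \<subseteq> V \<and>
     (\<forall>i. Suc i < length xs \<longrightarrow> E (xs ! i) (xs ! Suc i))"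

definition connected_graph :: "'a set \<Rightarrow> ('a \<Rightarrow> 'a \<Rightarrow> bool) \<Rightarrow> bool" where
  "connected_graph V E \<longleftrightarrow> (\<forall>u\<in>V. \<forall>v\<in>V. \<exists>xs. is_walk V E xs \<and> hd xs = u \<and> last xs = v)"

definition gdist :: "'a set \<Rightarrow> ('a \<Rightarrow> 'a \<Rightarrow> bool) \<Rightarrow> 'a \<Rightarrow> 'a \<Rightarrow> nat" where
  "gdist V E u v = (LEAST k. \<exists>xs. is_walk V E xs \<and> hd xs = u \<and> last xs = v \<and> length xs = Suc k)"

definition dis :: "'a set \<Rightarrow> ('a \<Rightarrow> 'a \<Rightarrow> bool) \<Rightarrow> nat \<Rightarrow> nat" where
  "dis V E i = card {{u, v} | u v. u \<in> V \<and> v \<in> V \<and> gdist V E u v = i}"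

text \<open>Hosoya polynomial; in a connected graph all distances are < card V.\<close>
definition hosoya :: "'a set \<Rightarrow> ('a \<Rightarrow> 'a \<Rightarrow> bool) \<Rightarrow> real poly" where
  "hosoya V E = (\<Sum>i<card V. monom (real (dis V E i)) i)"

end

theory Submission
  imports Defs "HOL-Computational_Algebra.Primes"
begin

lemma gop_PP: "i < 2^(n-1) \<Longrightarrow> j < 2^(n-1) \<Longrightarrow> gop n i j = (i + j) mod 2^(n-1)"
  unfolding gop_def Let_def by simp

lemma pow_split: "n \<ge> 1 \<Longrightarrow> (2::nat)^n = 2 * 2^(n-1)"
  by (metis Suc_diff_le diff_Suc_1 power_Suc)

lemma gop_0H: assumes "n \<ge> 1" "2^(n-1) \<le> j" "j < 2^n" shows "gop n 0 j = j"
proof -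
  have "j mod 2^(n-1) = j - 2^(n-1)" using assms pow_split[OF assms(1)]
    by (simp add: le_mod_geq)
  then show ?thesis using assms unfolding gop_def Let_def by simp
qed

lemma gop_HH: assumes "n \<ge> 3" "2^(n-1) \<le> a" shows "gop n a a = 0"
proof -
  have h2: "(2::nat)^(n-1) = 2 * 2^(n-2)" using pow_split[of "n-1"] assms(1)
    by (simp add: diff_diff_add numeral_2_eq_2)
  have "(2::nat)^(n-1) div 2 \<ge> 1" using h2 by simp
  then have e: "(2^(n-1) div 2 + 1) + (2^(n-1) div 2 - 1) = (2::nat)^(n-1)"
    using h2 by simp
  have "(2^(n-1) div 2 + 1) * a + (2^(n-1) div 2 - 1) * a = (2::nat)^(n-1) * a"
    by (metis e distrib_right)
  then show ?thesis using assms unfolding gop_def Let_def by simp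
qed

lemma gpow_1[simp]: "gpow n a 1 = a" "gpow n a (Suc 0) = a" unfolding gpow_def by simp_all

lemma gpow_Suc: "k \<ge> 1 \<Longrightarrow> gpow n a (Suc k) = gop n (gpow n a k) a"
  unfolding gpow_def by (cases k) auto

lemma gpow_P: assumes "a < 2^(n-1)" "k \<ge> 1" shows "gpow n a k = (k * a) mod 2^(n-1)"
  using assms(2)
proof (induction k)
  case 0 then show ?case by simp
next
  case (Suc k)
  show ?case
  proof (cases "k = 0")
    case True then show ?thesis using assms by simp
  next
    case False
    then have "gpow n a (Suc k) = gop n ((k * a) mod 2^(n-1)) a" using Suc gpow_Suc by simp
    also have "\<dots> = ((k*a) mod 2^(n-1) + a) mod 2^(n-1)" using assms by (simp add: gop_PP)
    also have "\<dots> = (k * a + a) mod 2^(n-1)" by (simp add: mod_add_left_eq)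
    also have "\<dots> = (Suc k * a) mod 2^(n-1)" by (simp add: mod_add_left_eq add.commute)
    finally show ?thesis .
  qed
qed

lemma gpow_H: assumes "n \<ge> 3" "2^(n-1) \<le> a" "a < 2^n" "k \<ge> 1"
  shows "gpow n a k = (if odd k then a else 0)"
  using assms(4)
proof (induction k)
  case 0 then show ?case by simp
next
  case (Suc k)
  show ?case
  proof (cases "k = 0")
    case True then show ?thesis by simp
  next
    case False
    then have "gpow n a (Suc k) = gop n (if odd k then a else 0) a" using Suc gpow_Suc by simp
    then show ?thesis using gop_HH[OF assms(1,2)] gop_0H[of n a] assms by auto
  qed
qed


lemma cyc1: fixes u v r :: nat assumes "u < 2^r" "v < 2^r" "gcd u (2^r) dvd v"
  shows "\<exists>k\<ge>1. (k*u) mod 2^r = v"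
proof (cases "u = 0")
  case True
  then have "v = 0" using assms True by (auto dest: dvd_imp_le)
  then show ?thesis using True by auto
next
  case False
  obtain x y where xy: "u * x = 2^r * y + gcd u (2^r)" using bezout_nat[OF False] by blast
  obtain c where c: "v = gcd u (2^r) * c" using assms(3) by blast
  have "u * (x*c) = 2^r * (y*c) + v" using xy c by (simp add: algebra_simps)
  then have m: "((x*c)*u) mod 2^r = v" using assms(2) by (metis mult.commute mod_mult_self3 mod_less)
  show ?thesis
  proof (cases "x*c = 0")
    case True
    then have "v = 0" using m by (metis mult_0 mod_0)
    then show ?thesis by (intro exI[of _ "2^r"]) auto
  next
    case False
    then show ?thesis using m by (intro exI[of _ "x*c"]) auto
  qed
qed

lemma cyc: fixes u v r :: nat assumes "u < 2^r" "v < 2^r"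
  shows "\<exists>k\<ge>1. (k*u) mod 2^r = v \<or> (k*v) mod 2^r = u"
proof -
  obtain i where i: "gcd u (2^r) = 2^i" using divides_primepow_nat[of 2 "gcd u (2^r)" r] by auto
  obtain j where j: "gcd v (2^r) = 2^j" using divides_primepow_nat[of 2 "gcd v (2^r)" r] by auto
  show ?thesis
  proof (cases "i \<le> j")
    case True
    then have "gcd u (2^r) dvd v" using i j by (metis gcd_dvd1 dvd_trans le_imp_power_dvd)
    then show ?thesis using cyc1[OF assms] by blast
  next
    case False
    then have "gcd v (2^r) dvd u" using i j by (metis gcd_dvd1 dvd_trans le_imp_power_dvd nat_le_linear)
    then show ?thesis using cyc1[OF assms(2,1)] by blast
  qed
qed

lemma gpow_H_cases: assumes "n \<ge> 3" "2^(n-1) \<le> a" "a < 2^n" "k \<ge> 1"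
  shows "gpow n a k = a \<or> gpow n a k = 0"
  using gpow_H[OF assms] by auto

lemma padj_iff: assumes "n \<ge> 3"
  shows "padj n u v \<longleftrightarrow> u < 2^n \<and> v < 2^n \<and> u \<noteq> v \<and>
     ((u < 2^(n-1) \<and> v < 2^(n-1)) \<or> u = 0 \<or> v = 0)"
proof -
  have n1: "n \<ge> 1" using assms by simp
  have P: "gpow n a k < 2^(n-1)" if "a < 2^(n-1)" "k \<ge> 1" for a k
    using gpow_P[OF that] by simp
  have Z: "\<exists>k\<ge>1. gpow n a k = 0" if "a < 2^n" for a
  proof (cases "a < 2^(n-1)")
    case True then show ?thesis using gpow_P[OF True, of "2^(n-1)"] by (intro exI[of _ "2^(n-1)"]) simp
  next
    case False then show ?thesis using gpow_H[OF assms _ that, of 2] by (intro exI[of _ 2]) simp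
  qed
  show ?thesis
  proof
    assume a: "padj n u v"
    then obtain k where k: "k \<ge> 1" "gpow n u k = v \<or> gpow n v k = u" unfolding padj_def by blast
    from a have uv: "u < 2^n" "v < 2^n" "u \<noteq> v" unfolding padj_def gcarrier_def by auto
    show "u < 2^n \<and> v < 2^n \<and> u \<noteq> v \<and> ((u < 2^(n-1) \<and> v < 2^(n-1)) \<or> u = 0 \<or> v = 0)"
    proof (rule ccontr)
      assume "\<not> ?thesis"
      then have c: "\<not> (u < 2^(n-1) \<and> v < 2^(n-1))" "u \<noteq> 0" "v \<noteq> 0" using uv by auto
      show False
      proof (cases "u < 2^(n-1)")
        case True
        then have "2^(n-1) \<le> v" using c by auto
        then show False using k P[OF True k(1)] gpow_H_cases[OF assms _ uv(2) k(1)] uv c by auto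
      next
        case False
        note F = this
        show False
        proof (cases "v < 2^(n-1)")
          case True
          then show False using k P[OF True k(1)] gpow_H_cases[OF assms _ uv(1) k(1)] F uv c by auto
        next
          case False
          then show False using k gpow_H_cases[OF assms _ uv(1) k(1)] gpow_H_cases[OF assms _ uv(2) k(1)] F uv c by auto
        qed
      qed
    qed
  next
    assume a: "u < 2^n \<and> v < 2^n \<and> u \<noteq> v \<and> ((u < 2^(n-1) \<and> v < 2^(n-1)) \<or> u = 0 \<or> v = 0)"
    have "\<exists>k\<ge>1. gpow n u k = v \<or> gpow n v k = u"
    proof (cases "u < 2^(n-1) \<and> v < 2^(n-1)")
      case True
      then obtain k where "k \<ge> 1" "(k*u) mod 2^(n-1) = v \<or> (k*v) mod 2^(n-1) = u"
        using cyc[of u "n-1" v] by blast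
      then show ?thesis using gpow_P[of u n k] gpow_P[of v n k] True by metis
    next
      case False
      then have "u = 0 \<or> v = 0" using a by auto
      then show ?thesis using Z a by metis
    qed
    then show "padj n u v" using a unfolding padj_def gcarrier_def by auto
  qed
qed

lemma walk1: "is_walk V E [u] \<longleftrightarrow> u \<in> V" unfolding is_walk_def by auto
lemma walk2: "is_walk V E [u,v] \<longleftrightarrow> u \<in> V \<and> v \<in> V \<and> E u v"
  unfolding is_walk_def by (auto simp: less_Suc_eq)
lemma walk3: "u \<in> V \<Longrightarrow> v \<in> V \<Longrightarrow> w \<in> V \<Longrightarrow> E u w \<Longrightarrow> E w v \<Longrightarrow> is_walk V E [u,w,v]"
  unfolding is_walk_def by (auto simp: less_Suc_eq nth_Cons split: nat.split)

lemma walk_len1: "is_walk V E xs \<Longrightarrow> length xs = Suc 0 \<Longrightarrow> hd xs = last xs"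
  by (cases xs) auto
lemma walk_len2: "is_walk V E xs \<Longrightarrow> length xs = Suc (Suc 0) \<Longrightarrow> E (hd xs) (last xs)"
proof -
  assume w: "is_walk V E xs" and l: "length xs = Suc (Suc 0)"
  from l obtain a b where "xs = [a,b]" by (metis length_0_conv length_Suc_conv)
  then show ?thesis using w by (simp add: walk2)
qed

lemma gdist_0: "u \<in> V \<Longrightarrow> gdist V E u u = 0"
  unfolding gdist_def by (rule Least_eq_0) (intro exI[of _ "[u]"], simp add: walk1)

lemma gdist_1: assumes "u \<in> V" "v \<in> V" "E u v" "u \<noteq> v" shows "gdist V E u v = 1"
  unfolding gdist_def
proof (rule Least_equality)
  show "\<exists>xs. is_walk V E xs \<and> hd xs = u \<and> last xs = v \<and> length xs = Suc 1"
    using assms by (intro exI[of _ "[u,v]"]) (simp add: walk2)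
next
  fix k assume "\<exists>xs. is_walk V E xs \<and> hd xs = u \<and> last xs = v \<and> length xs = Suc k"
  then show "1 \<le> k" using walk_len1 assms(4) by (cases k) fastforce+
qed

lemma gdist_2: assumes "u \<in> V" "v \<in> V" "w \<in> V" "E u w" "E w v" "\<not> E u v" "u \<noteq> v"
  shows "gdist V E u v = 2"
  unfolding gdist_def
proof (rule Least_equality)
  show "\<exists>xs. is_walk V E xs \<and> hd xs = u \<and> last xs = v \<and> length xs = Suc 2"
    using assms by (intro exI[of _ "[u,w,v]"]) (simp add: walk3)
next
  fix k assume a: "\<exists>xs. is_walk V E xs \<and> hd xs = u \<and> last xs = v \<and> length xs = Suc k"
  show "2 \<le> k"
  proof (rule ccontr)
    assume "\<not> 2 \<le> k"
    then have "k = 0 \<or> k = 1" by auto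
    then show False using a walk_len1 walk_len2 assms(6,7) by fastforce
  qed
qed

lemma real_choose2: "real (N choose 2) = real N * (real N - 1) / 2"
proof -
  have ev: "even (N * (N - 1))" by (cases N) auto
  have "2 * (N choose 2) = N * (N - 1)" unfolding choose_two using ev by simp
  then have "2 * real (N choose 2) = real N * real (N - 1)" by (metis of_nat_mult of_nat_numeral)
  then show ?thesis by (cases N) auto
qed

lemma monom3: "monom a 0 + monom b 1 + monom c 2 = [:a,b,c:]"
  by (simp add: poly_eq_iff coeff_pCons coeff_monom split: nat.split)

lemma pow_m_lt: "n \<ge> 1 \<Longrightarrow> (2::nat)^(n-1) < 2^n"
  using pow_split[of n] by simp

lemma gd: assumes n: "n \<ge> 3" and u: "u \<in> gcarrier n" and v: "v \<in> gcarrier n"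
  shows "gdist (gcarrier n) (padj n) u v = (if u = v then 0 else if padj n u v then 1 else 2)"
proof -
  have z: "0 \<in> gcarrier n" unfolding gcarrier_def by simp
  show ?thesis
  proof (cases "u = v")
    case True then show ?thesis using gdist_0 u by simp
  next
    case False
    show ?thesis
    proof (cases "padj n u v")
      case True then show ?thesis using gdist_1[of u "gcarrier n" v "padj n", OF u v True False] False by simp
    next
      case na: False
      then have "u \<noteq> 0" "v \<noteq> 0" using padj_iff[OF n] u v False unfolding gcarrier_def by auto
      then have "padj n u 0" "padj n 0 v" using padj_iff[OF n] u v unfolding gcarrier_def by auto
      then show ?thesis using gdist_2[of u "gcarrier n" v 0 "padj n", OF u v z _ _ na False] False na by simp
    qed
  qed
qed

lemma conn: assumes n: "n \<ge> 3" shows "connected_graph (gcarrier n) (padj n)"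
  unfolding connected_graph_def
proof (intro ballI)
  fix u v assume u: "u \<in> gcarrier n" and v: "v \<in> gcarrier n"
  have z: "0 \<in> gcarrier n" unfolding gcarrier_def by simp
  show "\<exists>xs. is_walk (gcarrier n) (padj n) xs \<and> hd xs = u \<and> last xs = v"
  proof (cases "u = v")
    case True then show ?thesis using u by (intro exI[of _ "[u]"]) (simp add: walk1)
  next
    case False
    show ?thesis
    proof (cases "padj n u v")
      case True then show ?thesis using u v by (intro exI[of _ "[u,v]"]) (simp add: walk2)
    next
      case na: False
      then have "u \<noteq> 0" "v \<noteq> 0" using padj_iff[OF n] u v False unfolding gcarrier_def by auto
      then have "padj n u 0" "padj n 0 v" using padj_iff[OF n] u v unfolding gcarrier_def by auto
      then show ?thesis using u v z by (intro exI[of _ "[u,0,v]"]) (simp add: walk3)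
    qed
  qed
qed

lemma padj_sym: "padj n u v = padj n v u" unfolding padj_def by auto

lemma dis_eq: assumes n: "n \<ge> 3"
  shows "dis (gcarrier n) (padj n) i = card {{u,v}|u v. u \<in> gcarrier n \<and> v \<in> gcarrier n \<and>
     (if u = v then 0 else if padj n u v then 1 else 2) = i}"
proof -
  have "{{u,v}|u v. u \<in> gcarrier n \<and> v \<in> gcarrier n \<and> gdist (gcarrier n) (padj n) u v = i}
     = {{u,v}|u v. u \<in> gcarrier n \<and> v \<in> gcarrier n \<and>
     (if u = v then 0 else if padj n u v then 1 else 2) = i}"
    using gd[OF n] by metis
  then show ?thesis unfolding dis_def by simp
qed

lemma counts: assumes n: "n \<ge> 3"
  shows "dis (gcarrier n) (padj n) 0 = 2^n"
    "real (dis (gcarrier n) (padj n) 1) = 2^(n-1) * (2^(n-1) + 1) / 2"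
    "real (dis (gcarrier n) (padj n) 2) = 3 * 2^(n-1) * (2^(n-1) - 1) / 2"
    "i \<ge> 3 \<Longrightarrow> dis (gcarrier n) (padj n) i = 0"
proof -
  define V where "V = gcarrier n"
  define m :: nat where "m = 2^(n-1)"
  have V: "V = {0..<2*m}" unfolding V_def m_def gcarrier_def using pow_split[of n] n by simp
  have fV: "finite V" unfolding V by simp
  have pa: "padj n u v \<longleftrightarrow> u \<in> V \<and> v \<in> V \<and> u \<noteq> v \<and> ((u < m \<and> v < m) \<or> u = 0 \<or> v = 0)" for u v
    using padj_iff[OF n, of u v] unfolding V m_def using pow_split[of n] n by auto
  have "{{u,v}|u v. u \<in> V \<and> v \<in> V \<and> (if u = v then 0 else if padj n u v then 1 else 2) = (0::nat)}
     = (\<lambda>u. {u}) ` V" by auto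
  then have "dis V (padj n) 0 = card ((\<lambda>u. {u}) ` V)" using dis_eq[OF n, of 0] unfolding V_def by simp
  also have "\<dots> = card V" by (rule card_image) (auto simp: inj_on_def)
  finally show "dis (gcarrier n) (padj n) 0 = 2^n" unfolding V_def gcarrier_def by simp
  show "i \<ge> 3 \<Longrightarrow> dis (gcarrier n) (padj n) i = 0"
  proof -
    assume "i \<ge> 3"
    then have e: "{{u,v}|u v. u \<in> V \<and> v \<in> V \<and> (if u = v then 0 else if padj n u v then 1 else 2) = i} = {}"
      by auto
    show ?thesis using dis_eq[OF n, of i] e unfolding V_def by (metis card.empty)
  qed
  define S1 where "S1 = {{u,v}|u v. u \<in> V \<and> v \<in> V \<and> padj n u v}"
  define S2 where "S2 = {{u,v}|u v. u \<in> V \<and> v \<in> V \<and> u \<noteq> v \<and> \<not> padj n u v}"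
  have d1: "dis V (padj n) 1 = card S1"
  proof -
    have "{{u,v}|u v. u \<in> V \<and> v \<in> V \<and> (if u = v then 0 else if padj n u v then 1 else 2) = (1::nat)} = S1"
      unfolding S1_def using pa by auto
    then show ?thesis using dis_eq[OF n, of 1] unfolding V_def by simp
  qed
  have d2: "dis V (padj n) 2 = card S2"
  proof -
    have "{{u,v}|u v. u \<in> V \<and> v \<in> V \<and> (if u = v then 0 else if padj n u v then 1 else 2) = (2::nat)} = S2"
      unfolding S2_def by auto
    then show ?thesis using dis_eq[OF n, of 2] unfolding V_def by simp
  qed
  define D where "D = {B. B \<subseteq> V \<and> card B = 2}"
  have cD: "card D = (2*m) choose 2" unfolding D_def using n_subsets[OF fV, of 2] V by simp
  have DS: "D = S1 \<union> S2"
  proof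
    show "D \<subseteq> S1 \<union> S2"
    proof
      fix B assume "B \<in> D"
      then obtain x y where "B = {x,y}" "x \<noteq> y" "x \<in> V" "y \<in> V" unfolding D_def card_2_iff by auto
      then show "B \<in> S1 \<union> S2" unfolding S1_def S2_def by blast
    qed
  next
    show "S1 \<union> S2 \<subseteq> D" unfolding S1_def S2_def D_def using pa by auto
  qed
  have dis12: "S1 \<inter> S2 = {}"
  proof (rule ccontr)
    assume "S1 \<inter> S2 \<noteq> {}"
    then obtain u v x y where "{u,v} = {x,y}" "padj n u v" "\<not> padj n x y" "x \<noteq> y"
      unfolding S1_def S2_def by blast
    then show False by (metis doubleton_eq_iff padj_sym)
  qed
  have fD: "finite D" unfolding D_def using fV by simp
  have fS: "finite S1" "finite S2" using fD DS by (metis finite_Un)+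
  have cD2: "card D = card S1 + card S2" unfolding DS using card_Un_disjoint[OF fS dis12] .
  define A1 where "A1 = {B. B \<subseteq> {0..<m} \<and> card B = 2}"
  define A2 where "A2 = (\<lambda>v. {0,v}) ` {m..<2*m}"
  have S1A: "S1 = A1 \<union> A2"
  proof
    show "S1 \<subseteq> A1 \<union> A2"
    proof
      fix B assume "B \<in> S1"
      then obtain u v where B: "B = {u,v}" "padj n u v" unfolding S1_def by blast
      then have uv: "u \<in> V" "v \<in> V" "u \<noteq> v" "((u < m \<and> v < m) \<or> u = 0 \<or> v = 0)" using pa by auto
      show "B \<in> A1 \<union> A2"
      proof (cases "u < m \<and> v < m")
        case True then show ?thesis using B uv unfolding A1_def by auto
      next
        case False
        then have "(u = 0 \<and> m \<le> v) \<or> (v = 0 \<and> m \<le> u)" using uv by auto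
        then show ?thesis using B uv V unfolding A2_def by (auto simp: insert_commute)
      qed
    qed
  next
    show "A1 \<union> A2 \<subseteq> S1"
    proof
      fix B assume "B \<in> A1 \<union> A2"
      then show "B \<in> S1"
      proof
        assume "B \<in> A1"
        then obtain x y where xy: "B = {x,y}" "x \<noteq> y" "x < m" "y < m" unfolding A1_def card_2_iff by auto
        then have xV: "x \<in> V" "y \<in> V" unfolding V by auto
        then have "padj n x y" using pa xy by blast
        then show ?thesis unfolding S1_def using xy xV by blast
      next
        assume "B \<in> A2"
        then obtain v where v: "B = {0,v}" "m \<le> v" "v < 2*m" unfolding A2_def by auto
        moreover have "m > 0" unfolding m_def by simp
        ultimately have vV: "0 \<in> V" "v \<in> V" "v \<noteq> 0" unfolding V by auto
        then have "padj n 0 v" using pa by blast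
        then show ?thesis unfolding S1_def using v vV by blast
      qed
    qed
  qed
  have cA1: "card A1 = m choose 2" unfolding A1_def using n_subsets[of "{0..<m}" 2] by simp
  have cA2: "card A2 = m" unfolding A2_def
    by (subst card_image) (auto simp: inj_on_def doubleton_eq_iff)
  have dA: "A1 \<inter> A2 = {}" unfolding A1_def A2_def by (auto simp: subset_iff)
  have fA: "finite A1" "finite A2" using fS(1) unfolding S1A by auto
  have cS1: "card S1 = (m choose 2) + m" unfolding S1A card_Un_disjoint[OF fA dA] cA1 cA2 ..
  have rS1: "real (card S1) = real m * (real m + 1) / 2"
    using cS1 real_choose2[of m] by (simp add: field_simps)
  have rS2: "real (card S2) = 3 * real m * (real m - 1) / 2"
  proof -
    have "real (card S2) = real (card D) - real (card S1)" using cD2 by simp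
    also have "\<dots> = 3 * real m * (real m - 1) / 2" using cD rS1 real_choose2[of "2*m"]
      by (simp add: field_simps)
    finally show ?thesis .
  qed
  show "real (dis (gcarrier n) (padj n) 1) = 2^(n-1) * (2^(n-1) + 1) / 2"
    using d1 rS1 unfolding V_def m_def by simp
  show "real (dis (gcarrier n) (padj n) 2) = 3 * 2^(n-1) * (2^(n-1) - 1) / 2"
    using d2 rS2 unfolding V_def m_def by simp
qed

theorem mainTheorem4:
  fixes n :: nat
  assumes "n \<ge> 3"
  shows "connected_graph (gcarrier n) (padj n) \<and>
    hosoya (gcarrier n) (padj n) =
      [: 2 ^ n,
         2 ^ (n-1) * (2 ^ (n-1) + 1) / 2,
         3 * 2 ^ (n-1) * (2 ^ (n-1) - 1) / 2 :]"
proof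
  show "connected_graph (gcarrier n) (padj n)" using conn[OF assms] .
  define f where "f i = monom (real (dis (gcarrier n) (padj n) i)) i" for i
  have cV: "card (gcarrier n) = 2^n" unfolding gcarrier_def by simp
  have "(3::nat) \<le> 2^3" by simp
  also have "\<dots> \<le> 2^n" using assms by (intro power_increasing) auto
  finally have le: "3 \<le> (2::nat)^n" .
  have "hosoya (gcarrier n) (padj n) = (\<Sum>i<2^n. f i)" unfolding hosoya_def cV f_def ..
  also have "\<dots> = (\<Sum>i<3. f i)"
    by (rule sum.mono_neutral_right) (use le counts(4)[OF assms] in \<open>auto simp: f_def\<close>)
  also have "\<dots> = f 0 + f 1 + f 2" by (simp add: numeral_3_eq_3 numeral_2_eq_2)
  also have "\<dots> = [: 2 ^ n, 2 ^ (n-1) * (2 ^ (n-1) + 1) / 2, 3 * 2 ^ (n-1) * (2 ^ (n-1) - 1) / 2 :]"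
    unfolding f_def counts(2,3)[OF assms] monom3[symmetric] using counts(1)[OF assms] by simp
  finally show "hosoya (gcarrier n) (padj n) = [: 2 ^ n, 2 ^ (n-1) * (2 ^ (n-1) + 1) / 2, 3 * 2 ^ (n-1) * (2 ^ (n-1) - 1) / 2 :]" .
qed
end
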